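(* In the Rayleigh fading system model of the context with a single beam ($M=1$), if $\rho\le 1$ then the ergodic sum rate $R(\vec p)$ is a Schur-concave function of the feedback probabilities $\vec p\in[0,1]^n$. Consequently, a homogeneous threshold feedback policy solves the threshold selection problem: for every $\lambda\in(0,n]$ and every threshold vector $\vec\tau$ with $\sum_{i=1}^n \Pr\{\gamma_{i,1}\ge\tau_i\}\le\lambda$, there is a homogeneous threshold vector $\vec\tau'=(\tau,\dots,\tau)$ satisfying the same constraint with $R(\vec\tau')\ge R(\vec\tau)$.
   Context: System model: there are $n\ge 2$ users and $M\ge1$ beams. The SINR of user $i$ on beam $m$ is $\gamma_{i,m} = |X_{i,m}|^2 / \big(\tfrac1\rho + \sum_{k\ne m}|X_{i,k}|^2\big)$ with $\rho>0$, where (Rayleigh fading) the $X_{i,k}$ are i.i.d. unit-power circularly symmetric complex Gaussian; users are i.i.d., and the marginal distribution of each $\gamma_{i,m}$ is $F(x) = 1 - e^{-x/\rho}/(x+1)^{M-1}$, $x\ge0$, with density $f(x) = \frac{e^{-x/\rho}}{(x+1)^M}\big[\tfrac1\rho(x+1)+M-1\big]$. Each user $i$ has a threshold $\tau_i\in[0,\infty]$ and truncated SINR $\bar\gamma_{i,m}=\gamma_{i,m}\mathbf 1\{\gamma_{i,m}\ge\tau_i\}$. The ergodic sum rate is $R(\vec\tau) = \mathbb{E}\big[\sum_{m=1}^M\log(1+\max_{1\le i\le n}\bar\gamma_{i,m})\big]$. The feedback probability is $p_i = \Pr\{\gamma_{i,1}\ge\tau_i\}=1-F(\tau_i)$, and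 $R$ is regarded as a function $R(\vec p)$ via $\tau_i=F^{-1}(1-p_i)$ (with $F^{-1}(1)=+\infty$). A threshold vector is homogeneous if all thresholds are equal. Majorization: $\vec x$ majorizes $\vec y$ if the partial sums of the decreasingly ordered coordinates of $\vec x$ dominate those of $\vec y$ and the total sums are equal; $\varphi$ is Schur-concave if $\vec x$ majorizing $\vec y$ implies $\varphi(\vec x)\le\varphi(\vec y)$. *)

theory Defs
  imports "HOL-Probability.Probability"
begin

definition sinr_cdf :: "nat \<Rightarrow> real \<Rightarrow> real \<Rightarrow> real" where
  "sinr_cdf M \<rho> x = (if x < 0 then 0 else 1 - exp (- x / \<rho>) / (x + 1) ^ (M - 1))"

definition sinr_density :: "nat \<Rightarrow> real \<Rightarrow> real \<Rightarrow> real" where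
  "sinr_density M \<rho> x = (if x < 0 then 0 else
     exp (- x / \<rho>) / (x + 1) ^ M * ((1 / \<rho>) * (x + 1) + (real M - 1)))"

definition sinr_thr :: "nat \<Rightarrow> real \<Rightarrow> real \<Rightarrow> ereal" where
  "sinr_thr M \<rho> p = (if p = 0 then \<infinity>
     else ereal (THE x. 0 \<le> x \<and> sinr_cdf M \<rho> x = 1 - p))"

definition trunc_sinr :: "real \<Rightarrow> ereal \<Rightarrow> real" where
  "trunc_sinr g t = (if t \<le> ereal g then g else 0)"

definition sum_rate1 :: "'a measure \<Rightarrow> nat \<Rightarrow> (nat \<Rightarrow> 'a \<Rightarrow> real) \<Rightarrow> (nat \<Rightarrow> ereal) \<Rightarrow> real" where
  "sum_rate1 P n gam \<tau> =
     (\<integral>\<omega>. ln (1 + Max ((\<lambda>i. trunc_sinr (gam i \<omega>) (\<tau> i)) ` {..<n})) \<partial>P)"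

definition top_sum :: "nat \<Rightarrow> (nat \<Rightarrow> real) \<Rightarrow> nat \<Rightarrow> real" where
  "top_sum n x k = sum_list (take k (rev (sort (map x [0..<n]))))"

definition majorizes :: "nat \<Rightarrow> (nat \<Rightarrow> real) \<Rightarrow> (nat \<Rightarrow> real) \<Rightarrow> bool" where
  "majorizes n x y \<longleftrightarrow> (\<forall>k\<le>n. top_sum n y k \<le> top_sum n x k) \<and>
     (\<Sum>i<n. x i) = (\<Sum>i<n. y i)"

definition schur_concave_on :: "nat \<Rightarrow> (nat \<Rightarrow> real) set \<Rightarrow> ((nat \<Rightarrow> real) \<Rightarrow> real) \<Rightarrow> bool" where
  "schur_concave_on n D \<phi> \<longleftrightarrow>
     (\<forall>x\<in>D. \<forall>y\<in>D. majorizes n x y \<longrightarrow> \<phi> x \<le> \<phi> y)"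

end

theory Submission
  imports Defs
begin


lemma vd_within:
  fixes F f :: "real \<Rightarrow> real"
  assumes "(F has_real_derivative d) (at v)" "d = f v"
  shows "(F has_vector_derivative f v) (at v within S)"
  using assms has_real_derivative_iff_has_vector_derivative has_vector_derivative_at_within by blast

lemma int_ereal_all:
  fixes f :: "real \<Rightarrow> real"
  assumes "continuous_on UNIV f"
  shows "interval_lebesgue_integrable lborel (ereal a) (ereal b) f"
  by (metis assms continuous_on_eq_continuous_within interval_integrable_isCont UNIV_I)

lemma LBINT_split3:
  fixes f :: "real \<Rightarrow> real"
  assumes "continuous_on UNIV f"
  shows "(LBINT v=ereal a..ereal b. f v) + (LBINT v=ereal b..ereal c. f v) = (LBINT v=ereal a..ereal c. f v)"
proof -
  have e: "min (ereal a) (min (ereal b) (ereal c)) = ereal (min a (min b c))"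
       "max (ereal a) (max (ereal b) (ereal c)) = ereal (max a (max b c))"
    by (auto simp: min_def max_def)
  show ?thesis using int_ereal_all[OF assms, of "min a (min b c)" "max a (max b c)"]
    by (intro interval_integral_sum) (simp only: e)
qed

lemma FTC_real:
  fixes f F :: "real \<Rightarrow> real"
  assumes "continuous_on UNIV f"
    "\<And>v. min a b \<le> v \<Longrightarrow> v \<le> max a b \<Longrightarrow> (F has_real_derivative f v) (at v)"
  shows "(LBINT v=ereal a..ereal b. f v) = F b - F a"
  apply (rule interval_integral_FTC_finite)
  using assms(1) continuous_on_subset apply blast
  using assms(2) vd_within by blast

lemma int01:
  assumes "0 \<le> y" "y \<le> x" "x \<le> 1"
  shows "(LBINT v=ereal 0..ereal 1. (1 - min x (1-v)) * (1 - min y (1-v))) =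
         1/3 + (1-x)^2*(1-y)/2 + (1-y)^3/6"
proof -
  define f where "f v = (1 - min x (1-v)) * (1 - min y (1-v))" for v :: real
  have cont: "continuous_on UNIV f" unfolding f_def by (intro continuous_intros)
  define F1 where "F1 v = (1-x)*(1-y)* v" for v :: real
  define F2 where "F2 v = (1-y)* v^2/2" for v :: real
  define F3 where "F3 v = v^3/3" for v :: real
  have s1: "(LBINT v=ereal 0..ereal (1-x). f v) = F1 (1-x) - F1 0"
  proof (rule FTC_real[OF cont])
    fix v :: real assume "min 0 (1 - x) \<le> v" "v \<le> max 0 (1 - x)"
    then show "(F1 has_real_derivative f v) (at v)"
      using assms unfolding F1_def by (auto intro!: derivative_eq_intros simp: f_def min_def)
  qed
  have s2: "(LBINT v=ereal (1-x)..ereal (1-y). f v) = F2 (1-y) - F2 (1-x)"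
  proof (rule FTC_real[OF cont])
    fix v :: real assume "min (1-x) (1 - y) \<le> v" "v \<le> max (1-x) (1 - y)"
    then show "(F2 has_real_derivative f v) (at v)"
      using assms unfolding F2_def by (auto intro!: derivative_eq_intros simp: f_def min_def)
  qed
  have s3: "(LBINT v=ereal (1-y)..ereal 1. f v) = F3 1 - F3 (1-y)"
  proof (rule FTC_real[OF cont])
    fix v :: real assume "min (1-y) 1 \<le> v" "v \<le> max (1-y) 1"
    then show "(F3 has_real_derivative f v) (at v)"
      using assms unfolding F3_def by (auto intro!: derivative_eq_intros simp: f_def min_def power2_eq_square) (subgoal_tac "x = y \<and> v = 1 - y", auto)
  qed
  have "(LBINT v=ereal 0..ereal 1. f v) = (LBINT v=ereal 0..ereal (1-x). f v) + (LBINT v=ereal (1-x)..ereal (1-y). f v) + (LBINT v=ereal (1-y)..ereal 1. f v)"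
    using LBINT_split3[OF cont] by (metis add.assoc)
  also have "\<dots> = 1/3 + (1-x)^2*(1-y)/2 + (1-y)^3/6"
    unfolding s1 s2 s3 F1_def F2_def F3_def by (simp add: power2_eq_square power3_eq_cube field_simps)
  finally show ?thesis unfolding f_def .
qed

lemma LBINT_0_inf: "(LBINT t=0..\<infinity>. f t) = (LINT t:{0<..}|lborel. f t)"
  by (simp add: interval_lebesgue_integral_def zero_ereal_def)

lemma set_integrable_0_inf: "set_integrable lborel (einterval 0 \<infinity>) f = set_integrable lborel {0<..} f"
  by (simp add: zero_ereal_def)

lemma exp_int:
  fixes \<rho> :: real
  assumes "0 < \<rho>"
  shows "set_integrable lborel {0<..} (\<lambda>t. exp(-t/\<rho>)/\<rho>)" "(LINT t:{0<..}|lborel. exp(-t/\<rho>)/\<rho>) = 1"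
proof -
  have lim: "((\<lambda>t::real. exp(-t/\<rho>)) \<longlongrightarrow> 0) at_top"
  proof -
    have "filterlim (\<lambda>t::real. (-1/\<rho>) * t) at_bot at_top"
      using assms by (intro filterlim_tendsto_neg_mult_at_bot[where c="-1/\<rho>"] filterlim_ident tendsto_const) auto
    then have "filterlim (\<lambda>t::real. -t/\<rho>) at_bot at_top" by simp
    then show ?thesis by (rule filterlim_compose[OF exp_at_bot])
  qed
  note FT = interval_integral_FTC_nonneg[of 0 \<infinity> "\<lambda>t. - exp(-t/\<rho>)" "\<lambda>t. exp(-t/\<rho>)/\<rho>" "-1" 0]
  have p: "(0::ereal) < \<infinity>" "\<And>x. 0 < ereal x \<Longrightarrow> ereal x < \<infinity> \<Longrightarrow> ((\<lambda>t. - exp(-t/\<rho>)) has_real_derivative exp(-x/\<rho>)/\<rho>) (at x)"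
     "\<And>x. 0 < ereal x \<Longrightarrow> ereal x < \<infinity> \<Longrightarrow> isCont (\<lambda>t. exp(-t/\<rho>)/\<rho>) x"
     "AE x in lborel. 0 < ereal x \<longrightarrow> ereal x < \<infinity> \<longrightarrow> 0 \<le> exp(-x/\<rho>)/\<rho>"
     "(((\<lambda>t. - exp(-t/\<rho>)) \<circ> real_of_ereal) \<longlongrightarrow> -1) (at_right 0)"
    using assms
    by (auto intro!: derivative_eq_intros tendsto_eq_intros simp: zero_ereal_def ereal_tendsto_simps)
  have p6: "(((\<lambda>t. - exp(-t/\<rho>)) \<circ> real_of_ereal) \<longlongrightarrow> 0) (at_left \<infinity>)"
    unfolding ereal_tendsto_simps using tendsto_minus[OF lim] by simp
  have 1: "set_integrable lborel (einterval 0 \<infinity>) (\<lambda>t. exp(-t/\<rho>)/\<rho>)"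
    "(LBINT t=0..\<infinity>. exp(-t/\<rho>)/\<rho>) = 0 - (-1)"
    using FT[OF p p6] by auto
  show "set_integrable lborel {0<..} (\<lambda>t. exp(-t/\<rho>)/\<rho>)" using 1(1) by (simp add: zero_ereal_def)
  show "(LINT t:{0<..}|lborel. exp(-t/\<rho>)/\<rho>) = 1" using 1(2) by (simp add: LBINT_0_inf)
qed

lemma meas_ind_cont:
  fixes f :: "real \<Rightarrow> real"
  assumes "continuous_on UNIV f"
  shows "(\<lambda>x. indicator {0<..} x *\<^sub>R f x) \<in> borel_measurable lborel"
proof -
  have [measurable]: "f \<in> borel_measurable borel" using assms by (rule borel_measurable_continuous_onI)
  show ?thesis by measurable
qed

lemma Hq:
  fixes \<rho> x y :: real
  assumes r: "0 < \<rho>" and xy: "0 \<le> y" "y \<le> x" "x \<le> 1"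
  shows "set_integrable lborel {0<..} (\<lambda>t. (1 - min x (exp(-t/\<rho>))) * (1 - min y (exp(-t/\<rho>))) * (exp(-t/\<rho>)/\<rho>))"
    and "(LINT t:{0<..}|lborel. (1 - min x (exp(-t/\<rho>))) * (1 - min y (exp(-t/\<rho>))) * (exp(-t/\<rho>)/\<rho>))
           = 1/3 + (1-x)^2*(1-y)/2 + (1-y)^3/6"
proof -
  define f where "f s = (1 - min x (1-s)) * (1 - min y (1-s))" for s :: real
  define g where "g t = 1 - exp(-t/\<rho>)" for t :: real
  define g' where "g' t = exp(-t/\<rho>)/\<rho>" for t :: real
  have fg: "f (g t) * g' t = (1 - min x (exp(-t/\<rho>))) * (1 - min y (exp(-t/\<rho>))) * (exp(-t/\<rho>)/\<rho>)" for t
    by (simp add: f_def g_def g'_def)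
  have lim: "((\<lambda>t::real. exp(-t/\<rho>)) \<longlongrightarrow> 0) at_top"
  proof -
    have "filterlim (\<lambda>t::real. (-1/\<rho>) * t) at_bot at_top"
      using r by (intro filterlim_tendsto_neg_mult_at_bot[where c="-1/\<rho>"] filterlim_ident tendsto_const) auto
    then have "filterlim (\<lambda>t::real. -t/\<rho>) at_bot at_top" by simp
    then show ?thesis by (rule filterlim_compose[OF exp_at_bot])
  qed
  have I: "set_integrable lborel {0<..} (\<lambda>t. f (g t) * g' t)"
  proof (rule set_integrable_bound[OF exp_int(1)[OF r]])
    show "set_borel_measurable lborel {0<..} (\<lambda>t. f (g t) * g' t)"
      unfolding set_borel_measurable_def f_def g_def g'_def
      using r by (intro meas_ind_cont) (auto intro!: continuous_intros)
    have "norm (f (g t) * g' t) \<le> norm (exp(-t/\<rho>)/\<rho>)" for t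
    proof -
      have fge: "f (g t) = (1 - min x (exp(-t/\<rho>))) * (1 - min y (exp(-t/\<rho>)))" by (simp add: f_def g_def)
      have e0: "0 < exp(-t/\<rho>)" by simp
      have gen: "\<And>e::real. 0 < e \<Longrightarrow> 0 \<le> 1 - min x e \<and> 1 - min x e \<le> 1 \<and> 0 \<le> 1 - min y e \<and> 1 - min y e \<le> 1"
        using xy by (auto simp: min_def)
      have "0 \<le> 1 - min x (exp(-t/\<rho>))" "1 - min x (exp(-t/\<rho>)) \<le> 1"
           "0 \<le> 1 - min y (exp(-t/\<rho>))" "1 - min y (exp(-t/\<rho>)) \<le> 1"
        using gen[OF e0] by auto
      then have "0 \<le> f (g t)" "f (g t) \<le> 1" unfolding fge by (auto intro: mult_le_one)
      moreover have g0: "0 \<le> g' t" using r unfolding g'_def by simp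
      ultimately have a: "f (g t) * g' t \<le> g' t" "0 \<le> f (g t) * g' t"
        by (auto intro: mult_left_le_one_le)
      have "norm (exp(-t/\<rho>)/\<rho>) = g' t" using r by (simp add: g'_def)
      moreover have "norm (f (g t) * g' t) = f (g t) * g' t" using a by simp
      ultimately show ?thesis using a by linarith
    qed
    then show "AE t in lborel. t \<in> {0<..} \<longrightarrow> norm (f (g t) * g' t) \<le> norm (exp(-t/\<rho>)/\<rho>)" by simp
  qed
  then show "set_integrable lborel {0<..} (\<lambda>t. (1 - min x (exp(-t/\<rho>))) * (1 - min y (exp(-t/\<rho>))) * (exp(-t/\<rho>)/\<rho>))"
    unfolding fg .
  have sub: "(LBINT s=0..1. f s) = (LBINT t=0..\<infinity>. f (g t) * g' t)"
  proof (rule interval_integral_substitution_nonneg(2))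
    show "(0::ereal) < \<infinity>" by simp
    show "\<And>t. 0 < ereal t \<Longrightarrow> ereal t < \<infinity> \<Longrightarrow> (g has_real_derivative g' t) (at t)"
      using r unfolding g_def g'_def by (auto intro!: derivative_eq_intros)
    show "\<And>t. 0 < ereal t \<Longrightarrow> ereal t < \<infinity> \<Longrightarrow> isCont f (g t)"
      unfolding f_def by (intro continuous_intros)
    show "\<And>t. 0 < ereal t \<Longrightarrow> ereal t < \<infinity> \<Longrightarrow> isCont g' t"
      using r unfolding g'_def by (intro continuous_intros) auto
    show "\<And>t. 0 < ereal t \<Longrightarrow> ereal t < \<infinity> \<Longrightarrow> 0 \<le> f (g t)"
      using xy unfolding f_def by (auto simp: min_def)
    show "\<And>t. 0 \<le> ereal t \<Longrightarrow> ereal t \<le> \<infinity> \<Longrightarrow> 0 \<le> g' t"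
      using r unfolding g'_def by simp
    show "((ereal \<circ> g \<circ> real_of_ereal) \<longlongrightarrow> 0) (at_right 0)"
      using r unfolding g_def by (auto intro!: tendsto_eq_intros simp: zero_ereal_def ereal_tendsto_simps)
    show "((ereal \<circ> g \<circ> real_of_ereal) \<longlongrightarrow> 1) (at_left \<infinity>)"
    proof -
      have "(g \<longlongrightarrow> 1) at_top" unfolding g_def using tendsto_diff[OF tendsto_const[of 1] lim] by simp
      then have "((ereal \<circ> g) \<longlongrightarrow> ereal 1) at_top" unfolding ereal_tendsto_simps2(1) .
      then have "(((ereal \<circ> g) \<circ> real_of_ereal) \<longlongrightarrow> ereal 1) (at_left \<infinity>)" unfolding ereal_tendsto_simps1(3) .
      then show ?thesis by (simp add: one_ereal_def)
    qed
    show "set_integrable lborel (einterval 0 \<infinity>) (\<lambda>t. f (g t) * g' t)"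
      using I by (simp add: zero_ereal_def)
  qed
  have "(LBINT s=0..1. f s) = 1/3 + (1-x)^2*(1-y)/2 + (1-y)^3/6"
    using int01[OF xy] unfolding f_def by (simp add: zero_ereal_def one_ereal_def)
  then show "(LINT t:{0<..}|lborel. (1 - min x (exp(-t/\<rho>))) * (1 - min y (exp(-t/\<rho>))) * (exp(-t/\<rho>)/\<rho>))
           = 1/3 + (1-x)^2*(1-y)/2 + (1-y)^3/6"
    using sub unfolding fg LBINT_0_inf by simp
qed

definition Gf :: "nat \<Rightarrow> real \<Rightarrow> (nat \<Rightarrow> real) \<Rightarrow> real \<Rightarrow> real" where
  "Gf n \<rho> p t = 1 - (\<Prod>i<n. 1 - min (p i) (exp (-t/\<rho>)))"

definition phi :: "nat \<Rightarrow> real \<Rightarrow> (nat \<Rightarrow> real) \<Rightarrow> real" where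
  "phi n \<rho> p = (LINT t:{0<..}|lborel. Gf n \<rho> p t / (1+t))"

lemma prod_one_minus_bounds:
  fixes m :: "nat \<Rightarrow> real"
  assumes "finite I" "\<And>i. i \<in> I \<Longrightarrow> 0 \<le> m i \<and> m i \<le> 1"
  shows "0 \<le> (\<Prod>i\<in>I. 1 - m i) \<and> (\<Prod>i\<in>I. 1 - m i) \<le> 1 \<and> 1 - (\<Sum>i\<in>I. m i) \<le> (\<Prod>i\<in>I. 1 - m i)"
  using assms
proof (induction I rule: finite_induct)
  case empty then show ?case by simp
next
  case (insert k I)
  then have IH: "0 \<le> (\<Prod>i\<in>I. 1 - m i)" "(\<Prod>i\<in>I. 1 - m i) \<le> 1" "1 - (\<Sum>i\<in>I. m i) \<le> (\<Prod>i\<in>I. 1 - m i)"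
    by auto
  have mk: "0 \<le> m k" "m k \<le> 1" using insert by auto
  have "(\<Prod>i\<in>insert k I. 1 - m i) = (1 - m k) * (\<Prod>i\<in>I. 1 - m i)" using insert by simp
  moreover have "(\<Sum>i\<in>insert k I. m i) = m k + (\<Sum>i\<in>I. m i)" using insert by simp
  moreover have "0 \<le> (1 - m k) * (\<Prod>i\<in>I. 1 - m i)" using IH mk by simp
  moreover have "(1 - m k) * (\<Prod>i\<in>I. 1 - m i) \<le> 1" using IH mk by (simp add: mult_le_one)
  moreover have "(1 - m k) * (\<Prod>i\<in>I. 1 - m i) \<ge> (\<Prod>i\<in>I. 1 - m i) - m k"
    using IH mk by (simp add: algebra_simps mult_left_le)
  ultimately show ?case using IH by linarith
qed

lemma Gf_bounds:
  assumes "\<forall>i<n. 0 \<le> p i \<and> p i \<le> 1"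
  shows "0 \<le> Gf n \<rho> p t \<and> Gf n \<rho> p t \<le> 1 \<and> Gf n \<rho> p t \<le> real n * exp (-t/\<rho>)"
proof -
  have m: "\<And>i. i \<in> {..<n} \<Longrightarrow> 0 \<le> min (p i) (exp (-t/\<rho>)) \<and> min (p i) (exp (-t/\<rho>)) \<le> 1"
    using assms by auto
  have "(\<Sum>i<n. min (p i) (exp (-t/\<rho>))) \<le> (\<Sum>i<n. exp (-t/\<rho>))"
    by (intro sum_mono) auto
  moreover have "0 \<le> (\<Prod>i<n. 1 - min (p i) (exp (-t/\<rho>))) \<and> (\<Prod>i<n. 1 - min (p i) (exp (-t/\<rho>))) \<le> 1 \<and>
     1 - (\<Sum>i<n. min (p i) (exp (-t/\<rho>))) \<le> (\<Prod>i<n. 1 - min (p i) (exp (-t/\<rho>)))"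
    by (rule prod_one_minus_bounds) (use m in auto)
  ultimately show ?thesis unfolding Gf_def by auto
qed

lemma phi_int:
  fixes \<rho> :: real
  assumes r: "0 < \<rho>" and box: "\<forall>i<n. 0 \<le> p i \<and> p i \<le> 1"
  shows "set_integrable lborel {0<..} (\<lambda>t. Gf n \<rho> p t / (1+t))"
proof (rule set_integrable_bound[OF set_integrable_mult_right[OF exp_int(1)[OF r], of "real n * \<rho>"]])
  show "set_borel_measurable lborel {0<..} (\<lambda>t. Gf n \<rho> p t / (1 + t))"
  proof -
    have "(\<lambda>t. Gf n \<rho> p t / (1 + t)) \<in> borel_measurable borel"
      unfolding Gf_def by measurable
    then show ?thesis unfolding set_borel_measurable_def by measurable
  qed
  have "norm (Gf n \<rho> p t / (1 + t)) \<le> norm (real n * \<rho> * (exp (- t / \<rho>) / \<rho>))" if t: "0 < t" for t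
  proof -
    have g: "0 \<le> Gf n \<rho> p t" "Gf n \<rho> p t \<le> real n * exp (-t/\<rho>)" using Gf_bounds[OF box] by auto
    have "Gf n \<rho> p t / (1 + t) \<le> Gf n \<rho> p t" using g t by (simp add: divide_le_eq mult_le_cancel_left1)
    moreover have "real n * \<rho> * (exp (- t / \<rho>) / \<rho>) = real n * exp (-t/\<rho>)" using r by simp
    ultimately show ?thesis using g t by simp
  qed
  then show "AE t in lborel. t \<in> {0<..} \<longrightarrow> norm (Gf n \<rho> p t / (1 + t)) \<le> norm (real n * \<rho> * (exp (- t / \<rho>) / \<rho>))"
    by auto
qed

lemma prod_split2:
  fixes h :: "nat \<Rightarrow> real"
  assumes "i < n" "j < n" "i \<noteq> j"
  shows "(\<Prod>k<n. h k) = h i * h j * (\<Prod>k\<in>{..<n}-{i,j}. h k)"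
proof -
  have "(\<Prod>k<n. h k) = h i * (\<Prod>k\<in>{..<n}-{i}. h k)" using assms by (simp add: prod.remove)
  also have "(\<Prod>k\<in>{..<n}-{i}. h k) = h j * (\<Prod>k\<in>{..<n}-{i}-{j}. h k)" using assms by (simp add: prod.remove)
  also have "{..<n}-{i}-{j} = {..<n}-{i,j}" by auto
  finally show ?thesis by (simp add: mult.assoc)
qed

lemma sign_k:
  fixes \<alpha> \<beta> a b u :: real
  assumes h: "0 \<le> \<beta>" "\<beta> \<le> b" "b \<le> a" "a \<le> \<alpha>" "\<alpha> \<le> 1" "a + b = \<alpha> + \<beta>" "0 \<le> u" "u \<le> 1"
  shows "(1-a)*(1-b) \<le> (1-u)*(1-\<beta>) \<Longrightarrow> 0 \<le> (1 - min \<alpha> u)*(1 - min \<beta> u) - (1 - min a u)*(1 - min b u)"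
    and "(1-u)*(1-\<beta>) \<le> (1-a)*(1-b) \<Longrightarrow> (1 - min \<alpha> u)*(1 - min \<beta> u) - (1 - min a u)*(1 - min b u) \<le> 0"
proof -
  have key: "(1-\<alpha>)*(1-\<beta>) - (1-a)*(1-b) = - ((\<alpha>-a)*(\<alpha>-b))"
    using h(6) by (simp add: algebra_simps) (smt (verit) h(6) mult.commute right_diff_distrib)
  have k1: "(\<alpha>-a)*(\<alpha>-b) \<ge> 0" using h by simp
  consider "u \<le> \<beta>" | "\<beta> \<le> u" "u \<le> b" | "b \<le> u" "u \<le> a" | "a \<le> u" "u \<le> \<alpha>" | "\<alpha> \<le> u" by linarith
  note cs = this
  show "(1-a)*(1-b) \<le> (1-u)*(1-\<beta>) \<Longrightarrow> 0 \<le> (1 - min \<alpha> u)*(1 - min \<beta> u) - (1 - min a u)*(1 - min b u)"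
  proof (cases rule: cs)
    case 1
    then have "min \<alpha> u = u" "min \<beta> u = u" "min a u = u" "min b u = u" using h by auto
    then show ?thesis by simp
  next
    case 2
    then have mm: "min \<alpha> u = u" "min \<beta> u = \<beta>" "min a u = u" "min b u = u" using h by auto
    then have "(1 - min \<alpha> u)*(1 - min \<beta> u) - (1 - min a u)*(1 - min b u) = (1-u)*(u-\<beta>)"
      unfolding mm by (simp add: algebra_simps)
    then show ?thesis using 2 h by simp
  next
    case 3
    then have mm: "min \<alpha> u = u" "min \<beta> u = \<beta>" "min a u = u" "min b u = b" using h by auto
    then have "(1 - min \<alpha> u)*(1 - min \<beta> u) - (1 - min a u)*(1 - min b u) = (1-u)*(b-\<beta>)"
      unfolding mm by (simp add: algebra_simps)
    then show ?thesis using 3 h by simp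
  next
    case 4
    then have mm: "min \<alpha> u = u" "min \<beta> u = \<beta>" "min a u = a" "min b u = b" using h by auto
    then have "(1 - min \<alpha> u)*(1 - min \<beta> u) - (1 - min a u)*(1 - min b u) = (1-u)*(1-\<beta>) - (1-a)*(1-b)"
      unfolding mm by (simp add: algebra_simps)
    then show "(1-a)*(1-b) \<le> (1-u)*(1-\<beta>) \<Longrightarrow> ?thesis" by simp
  next
    case 5
    then have mm: "min \<alpha> u = \<alpha>" "min \<beta> u = \<beta>" "min a u = a" "min b u = b" using h by auto
    then have e: "(1 - min \<alpha> u)*(1 - min \<beta> u) - (1 - min a u)*(1 - min b u) = (1-\<alpha>)*(1-\<beta>) - (1-a)*(1-b)"
      unfolding mm by simp
    assume hh: "(1-a)*(1-b) \<le> (1-u)*(1-\<beta>)"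
    have "(1-u)*(1-\<beta>) \<le> (1-\<alpha>)*(1-\<beta>)" using 5 h by (intro mult_right_mono) auto
    then show ?thesis unfolding e using hh by linarith
  qed
  show "(1-u)*(1-\<beta>) \<le> (1-a)*(1-b) \<Longrightarrow> (1 - min \<alpha> u)*(1 - min \<beta> u) - (1 - min a u)*(1 - min b u) \<le> 0"
  proof (cases rule: cs)
    case 1
    then have "min \<alpha> u = u" "min \<beta> u = u" "min a u = u" "min b u = u" using h by auto
    then show ?thesis by simp
  next
    case 2
    then have mm: "min \<alpha> u = u" "min \<beta> u = \<beta>" "min a u = u" "min b u = u" using h by auto
    then have e: "(1 - min \<alpha> u)*(1 - min \<beta> u) - (1 - min a u)*(1 - min b u) = (1-u)*(u-\<beta>)"
      unfolding mm by (simp add: algebra_simps)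
    assume hh: "(1-u)*(1-\<beta>) \<le> (1-a)*(1-b)"
    have "(1-a)*(1-b) \<le> (1-u)*(1-u)" using 2 h by (intro mult_mono) auto
    then show ?thesis unfolding e using hh by (simp add: algebra_simps)
  next
    case 3
    then have mm: "min \<alpha> u = u" "min \<beta> u = \<beta>" "min a u = u" "min b u = b" using h by auto
    then have e: "(1 - min \<alpha> u)*(1 - min \<beta> u) - (1 - min a u)*(1 - min b u) = (1-u)*(b-\<beta>)"
      unfolding mm by (simp add: algebra_simps)
    assume hh: "(1-u)*(1-\<beta>) \<le> (1-a)*(1-b)"
    have "(1-a)*(1-b) \<le> (1-u)*(1-b)" using 3 h by (intro mult_right_mono) auto
    then show ?thesis unfolding e using hh by (simp add: algebra_simps)
  next
    case 4
    then have mm: "min \<alpha> u = u" "min \<beta> u = \<beta>" "min a u = a" "min b u = b" using h by auto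
    then have "(1 - min \<alpha> u)*(1 - min \<beta> u) - (1 - min a u)*(1 - min b u) = (1-u)*(1-\<beta>) - (1-a)*(1-b)"
      unfolding mm by (simp add: algebra_simps)
    then show "(1-u)*(1-\<beta>) \<le> (1-a)*(1-b) \<Longrightarrow> ?thesis" by simp
  next
    case 5
    then have mm: "min \<alpha> u = \<alpha>" "min \<beta> u = \<beta>" "min a u = a" "min b u = b" using h by auto
    then have e: "(1 - min \<alpha> u)*(1 - min \<beta> u) - (1 - min a u)*(1 - min b u) = (1-\<alpha>)*(1-\<beta>) - (1-a)*(1-b)"
      unfolding mm by simp
    show ?thesis unfolding e key using k1 by simp
  qed
qed

lemma W_mono:
  fixes \<rho> s t :: real
  assumes r: "0 < \<rho>" "\<rho> \<le> 1" and st: "0 \<le> s" "s \<le> t"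
  shows "exp (s/\<rho>) / (1+s) \<le> exp (t/\<rho>) / (1+t)"
proof -
  have e: "exp (t/\<rho>) = exp (s/\<rho>) * exp ((t-s)/\<rho>)" by (simp add: exp_add[symmetric] diff_divide_distrib)
  have "t - s \<le> (t-s)/\<rho>" using r st by (simp add: le_divide_eq mult_left_le)
  then have "1 + (t - s) \<le> exp ((t-s)/\<rho>)" using exp_ge_add_one_self[of "(t-s)/\<rho>"] by linarith
  then have "exp (s/\<rho>) * (1 + (t-s)) \<le> exp (t/\<rho>)" unfolding e by simp
  then have "exp (s/\<rho>) * (1 + (t-s)) * (1+s) \<le> exp (t/\<rho>) * (1+s)" using st by (simp add: mult_right_mono)
  moreover have "exp (s/\<rho>) * (1+t) \<le> exp (s/\<rho>) * (1 + (t-s)) * (1+s)"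
  proof -
    have "s * s \<le> s * t" using st by (intro mult_left_mono) auto
    then have "1 + t \<le> (1 + (t-s)) * (1+s)" using st by (simp add: algebra_simps)
    then show ?thesis by (simp add: mult.assoc)
  qed
  ultimately have "exp (s/\<rho>) * (1+t) \<le> exp (t/\<rho>) * (1+s)" by linarith
  then show ?thesis using st by (simp add: divide_simps)
qed

lemma Hpoly_mono:
  fixes \<alpha> \<beta> a b :: real
  assumes h: "\<beta> \<le> b" "b \<le> a" "a \<le> \<alpha>" "a + b = \<alpha> + \<beta>"
  shows "1/3 + (1-a)^2*(1-b)/2 + (1-b)^3/6 \<le> 1/3 + (1-\<alpha>)^2*(1-\<beta>)/2 + (1-\<beta>)^3/6"
proof -
  define c where "c = (2 - a - b)/2"
  define d where "d = (a - b)/2"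
  define d' where "d' = (\<alpha> - \<beta>)/2"
  have 1: "(1-a)^2*(1-b)/2 + (1-b)^3/6 = 2/3*(c^3 + d^3)"
    unfolding c_def d_def by (simp add: power2_eq_square power3_eq_cube field_simps; simp add: algebra_simps)
  have 2: "(1-\<alpha>)^2*(1-\<beta>)/2 + (1-\<beta>)^3/6 = 2/3*(c^3 + d'^3)"
    using h(4) unfolding c_def d'_def by (simp add: power2_eq_square power3_eq_cube field_simps; smt (verit) h(4) mult.commute left_diff_distrib)
  have "d \<le> d'" "0 \<le> d" using h unfolding d_def d'_def by auto
  then have "d^3 \<le> d'^3" by (simp add: power_mono)
  then show ?thesis using 1 2 by simp
qed

lemma phi_T:
  fixes \<rho> :: real and p :: "nat \<Rightarrow> real"
  assumes r: "0 < \<rho>" "\<rho> \<le> 1" and box: "\<forall>k<n. 0 \<le> p k \<and> p k \<le> 1"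
    and ij: "i < n" "j < n" "i \<noteq> j"
    and ab: "a + b = p i + p j" "p j \<le> b" "b \<le> a" "a \<le> p i"
  shows "phi n \<rho> p \<le> phi n \<rho> (p(i:=a, j:=b))"
proof (cases "a = p i")
  case True
  then have "b = p j" using ab by simp
  then have "p(i:=a, j:=b) = p" using True by auto
  then show ?thesis by simp
next
  case False
  define \<alpha> where "\<alpha> = p i"
  define \<beta> where "\<beta> = p j"
  define p' where "p' = p(i:=a, j:=b)"
  have hb: "0 \<le> \<beta>" "\<beta> \<le> b" "b \<le> a" "a < \<alpha>" "\<alpha> \<le> 1" "a + b = \<alpha> + \<beta>"
    using box ij ab False unfolding \<alpha>_def \<beta>_def by auto
  have a0: "0 < a" using hb by linarith
  have b1: "\<beta> < 1" using hb by linarith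
  define u0 where "u0 = 1 - (1-a)*(1-b)/(1-\<beta>)"
  have u0a: "a \<le> u0"
  proof -
    have "(1-a)*(1-b) \<le> (1-a)*(1-\<beta>)" using hb by (intro mult_left_mono) auto
    then have "(1-a)*(1-b)/(1-\<beta>) \<le> 1 - a" using b1 by (simp add: divide_le_eq)
    then show ?thesis unfolding u0_def by linarith
  qed
  have u0le: "u0 \<le> 1" unfolding u0_def using hb b1 by (simp add: divide_nonneg_pos)
  have u0pos: "0 < u0" using u0a a0 by linarith
  have cross1: "(1-a)*(1-b) \<le> (1-u)*(1-\<beta>)" if "u \<le> u0" for u
  proof -
    have "(1-a)*(1-b)/(1-\<beta>) \<le> 1 - u" using that unfolding u0_def by linarith
    then show ?thesis using b1 by (simp add: divide_le_eq)
  qed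
  have cross2: "(1-u)*(1-\<beta>) \<le> (1-a)*(1-b)" if "u0 \<le> u" for u
  proof -
    have "1 - u \<le> (1-a)*(1-b)/(1-\<beta>)" using that unfolding u0_def by linarith
    then show ?thesis using b1 by (simp add: le_divide_eq)
  qed
  define e where "e t = exp (-t/\<rho>)" for t
  define khat where "khat u = (1 - min \<alpha> u)*(1 - min \<beta> u) - (1 - min a u)*(1 - min b u)" for u
  define C where "C t = (\<Prod>k\<in>{..<n}-{i,j}. 1 - min (p k) (e t))" for t
  define V where "V t = C t * (exp (t/\<rho>) / (1+t))" for t
  define t0 where "t0 = - \<rho> * ln u0"
  have t0: "0 \<le> t0" "e t0 = u0"
    using u0pos u0le r unfolding t0_def e_def by (auto simp: mult_le_0_iff)
  have e_anti: "e t \<le> e s" if "s \<le> t" for s t using that r unfolding e_def by (simp add: divide_right_mono)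
  have e_pos: "0 < e t" for t unfolding e_def by simp
  have C_nonneg: "0 \<le> C t" for t
    unfolding C_def using box by (intro prod_nonneg) auto
  have C_mono: "C s \<le> C t" if "s \<le> t" for s t
    unfolding C_def
  proof (rule prod_mono)
    fix k assume "k \<in> {..<n}-{i,j}"
    then have "0 \<le> p k" "p k \<le> 1" using box by auto
    then show "0 \<le> 1 - min (p k) (e s) \<and> 1 - min (p k) (e s) \<le> 1 - min (p k) (e t)"
      using e_anti[OF that] by auto
  qed
  have V_mono: "V s \<le> V t" if "0 \<le> s" "s \<le> t" for s t
    unfolding V_def using C_mono[OF that(2)] W_mono[OF r that] C_nonneg that
    by (intro mult_mono) auto
  have V_nonneg: "0 \<le> V t" if "0 \<le> t" for t unfolding V_def using C_nonneg that by simp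
  have Gp: "Gf n \<rho> p t = 1 - (1 - min \<alpha> (e t)) * (1 - min \<beta> (e t)) * C t" for t
    unfolding Gf_def C_def \<alpha>_def \<beta>_def e_def using prod_split2[OF ij] by simp
  have Gp': "Gf n \<rho> p' t = 1 - (1 - min a (e t)) * (1 - min b (e t)) * C t" for t
  proof -
    have "(\<Prod>k\<in>{..<n}-{i,j}. 1 - min (p' k) (e t)) = C t"
      unfolding C_def p'_def by (intro prod.cong) auto
    then show ?thesis
      unfolding Gf_def e_def using prod_split2[OF ij, of "\<lambda>k. 1 - min (p' k) (exp (-t/\<rho>))"] ij
      by (simp add: p'_def e_def)
  qed
  have box': "\<forall>k<n. 0 \<le> p' k \<and> p' k \<le> 1" using box hb unfolding p'_def by auto
  have pw: "V t0 * \<rho> * ((1 - min \<alpha> (e t)) * (1 - min \<beta> (e t)) * (e t/\<rho>) - (1 - min a (e t)) * (1 - min b (e t)) * (e t/\<rho>))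
            \<le> Gf n \<rho> p' t / (1+t) - Gf n \<rho> p t / (1+t)" if t: "t \<in> {0<..}" for t
  proof -
    have lhs: "V t0 * \<rho> * ((1 - min \<alpha> (e t)) * (1 - min \<beta> (e t)) * (e t/\<rho>) - (1 - min a (e t)) * (1 - min b (e t)) * (e t/\<rho>))
       = V t0 * (khat (e t) * e t)" using r unfolding khat_def by (simp add: field_simps)
    have rhs: "Gf n \<rho> p' t / (1+t) - Gf n \<rho> p t / (1+t) = V t * (khat (e t) * e t)"
    proof -
      have "exp (t/\<rho>) * e t = 1" unfolding e_def by (simp add: exp_minus_inverse[symmetric] exp_add[symmetric])
      then have "V t * e t = C t / (1+t)" unfolding V_def by (simp add: field_simps)
      moreover have "Gf n \<rho> p' t - Gf n \<rho> p t = C t * khat (e t)"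
        unfolding Gp Gp' khat_def by (simp add: algebra_simps)
      then have "Gf n \<rho> p' t / (1+t) - Gf n \<rho> p t / (1+t) = (C t / (1+t)) * khat (e t)"
        by (simp add: diff_divide_distrib[symmetric])
      ultimately show ?thesis by (metis mult.assoc mult.commute times_divide_eq_left)
    qed
    have u01: "0 \<le> e t" "e t \<le> 1" using e_pos[of t] e_anti[of 0 t] t by (auto simp: e_def)
    show ?thesis unfolding lhs rhs
    proof (cases "t0 \<le> t")
      case True
      then have "e t \<le> u0" using e_anti t0 by metis
      then have "0 \<le> khat (e t)" unfolding khat_def
        using sign_k(1)[OF hb(1,2,3) _ hb(5,6) u01 cross1] hb by auto
      then have "0 \<le> khat (e t) * e t" using u01 by simp
      moreover have "V t0 \<le> V t" using V_mono[OF t0(1) True] .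
      ultimately show "V t0 * (khat (e t) * e t) \<le> V t * (khat (e t) * e t)" by (metis mult_right_mono)
    next
      case False
      then have "u0 \<le> e t" using e_anti[of t t0] t0 by auto
      then have "khat (e t) \<le> 0" unfolding khat_def
        using sign_k(2)[OF hb(1,2,3) _ hb(5,6) u01 cross2] hb by auto
      then have "khat (e t) * e t \<le> 0" using u01 by (simp add: mult_nonpos_nonneg)
      moreover have "V t \<le> V t0" using V_mono[of t t0] False t by auto
      ultimately show "V t0 * (khat (e t) * e t) \<le> V t * (khat (e t) * e t)" by (metis mult_right_mono_neg)
    qed
  qed
  have I1: "set_integrable lborel {0<..} (\<lambda>t. (1 - min \<alpha> (e t)) * (1 - min \<beta> (e t)) * (e t/\<rho>))"
    and H1: "(LINT t:{0<..}|lborel. (1 - min \<alpha> (e t)) * (1 - min \<beta> (e t)) * (e t/\<rho>)) = 1/3 + (1-\<alpha>)^2*(1-\<beta>)/2 + (1-\<beta>)^3/6"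
    using Hq[OF r(1), of \<beta> \<alpha>] hb unfolding e_def by auto
  have I2: "set_integrable lborel {0<..} (\<lambda>t. (1 - min a (e t)) * (1 - min b (e t)) * (e t/\<rho>))"
    and H2: "(LINT t:{0<..}|lborel. (1 - min a (e t)) * (1 - min b (e t)) * (e t/\<rho>)) = 1/3 + (1-a)^2*(1-b)/2 + (1-b)^3/6"
    using Hq[OF r(1), of b a] hb unfolding e_def by auto
  have "V t0 * \<rho> * ((1/3 + (1-\<alpha>)^2*(1-\<beta>)/2 + (1-\<beta>)^3/6) - (1/3 + (1-a)^2*(1-b)/2 + (1-b)^3/6))
     = (LINT t:{0<..}|lborel. V t0 * \<rho> * ((1 - min \<alpha> (e t)) * (1 - min \<beta> (e t)) * (e t/\<rho>) - (1 - min a (e t)) * (1 - min b (e t)) * (e t/\<rho>)))"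
    using I1 I2 H1 H2 by (simp add: set_integral_diff(2))
  also have "\<dots> \<le> (LINT t:{0<..}|lborel. Gf n \<rho> p' t / (1+t) - Gf n \<rho> p t / (1+t))"
    using pw I1 I2 phi_int[OF r(1) box] phi_int[OF r(1) box']
    by (intro set_integral_mono set_integral_diff(1) set_integrable_mult_right) auto
  also have "\<dots> = phi n \<rho> p' - phi n \<rho> p"
    unfolding phi_def using phi_int[OF r(1) box] phi_int[OF r(1) box'] by (simp add: set_integral_diff(2))
  finally have "V t0 * \<rho> * ((1/3 + (1-\<alpha>)^2*(1-\<beta>)/2 + (1-\<beta>)^3/6) - (1/3 + (1-a)^2*(1-b)/2 + (1-b)^3/6))
     \<le> phi n \<rho> p' - phi n \<rho> p" .
  moreover have "0 \<le> V t0 * \<rho> * ((1/3 + (1-\<alpha>)^2*(1-\<beta>)/2 + (1-\<beta>)^3/6) - (1/3 + (1-a)^2*(1-b)/2 + (1-b)^3/6))"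
    using Hpoly_mono[of \<beta> b a \<alpha>] hb V_nonneg[OF t0(1)] r by simp
  ultimately show ?thesis unfolding p'_def by linarith
qed



lemma T_chain:
  fixes \<Phi> :: "(nat \<Rightarrow> real) \<Rightarrow> real" and n :: nat
  assumes Tstep: "\<And>x i j a b. \<forall>k<n. 0 \<le> x k \<and> x k \<le> 1 \<Longrightarrow> i < n \<Longrightarrow> j < n \<Longrightarrow> i \<noteq> j \<Longrightarrow>
      a + b = x i + x j \<Longrightarrow> x j \<le> b \<Longrightarrow> b \<le> a \<Longrightarrow> a \<le> x i \<Longrightarrow> \<Phi> x \<le> \<Phi> (x(i:=a, j:=b))"
    and loc: "\<And>x y. (\<forall>k<n. x k = y k) \<Longrightarrow> \<Phi> x = \<Phi> y"
  shows "\<forall>k<n. 0 \<le> X k \<and> X k \<le> 1 \<Longrightarrow> \<forall>k<n. 0 \<le> Y k \<and> Y k \<le> 1 \<Longrightarrow>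
    \<forall>i i'. i \<le> i' \<longrightarrow> i' < n \<longrightarrow> X i' \<le> X i \<Longrightarrow> \<forall>i i'. i \<le> i' \<longrightarrow> i' < n \<longrightarrow> Y i' \<le> Y i \<Longrightarrow>
    \<forall>m\<le>n. (\<Sum>i<m. Y i) \<le> (\<Sum>i<m. X i) \<Longrightarrow> (\<Sum>i<n. X i) = (\<Sum>i<n. Y i) \<Longrightarrow> \<Phi> X \<le> \<Phi> Y"
proof (induction "card {k. k<n \<and> X k \<noteq> Y k}" arbitrary: X rule: less_induct)
  case (less X)
  note boxX = less.prems(1) and boxY = less.prems(2) and sX = less.prems(3) and sY = less.prems(4)
    and pre = less.prems(5) and tot = less.prems(6)
  show ?case
  proof (cases "\<forall>k<n. X k = Y k")
    case True then show ?thesis using loc[of X Y] by simp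
  next
    case False
    then obtain k0 where k0: "k0 < n" "X k0 \<noteq> Y k0" by auto
    define J where "J = {k. k<n \<and> Y k < X k}"
    have finJ: "finite J" unfolding J_def by auto
    have J_ne: "J \<noteq> {}"
    proof
      assume "J = {}"
      then have le: "\<forall>k\<in>{..<n}. X k \<le> Y k" unfolding J_def by force
      moreover have "\<exists>k\<in>{..<n}. X k < Y k" using k0 le by force
      ultimately have "(\<Sum>i<n. X i) < (\<Sum>i<n. Y i)" by (intro sum_strict_mono_ex1) auto
      then show False using tot by simp
    qed
    define j where "j = Max J"
    have jJ: "j \<in> J" unfolding j_def using finJ J_ne by simp
    have jn: "j < n" "Y j < X j" using jJ unfolding J_def by auto
    have jmax: "\<And>i. i < n \<Longrightarrow> Y i < X i \<Longrightarrow> i \<le> j" unfolding j_def using finJ J_def by auto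
    have gapj: "X j - Y j \<le> (\<Sum>i<Suc j. X i) - (\<Sum>i<Suc j. Y i)"
      using pre jn by (simp add: sum.lessThan_Suc)
    define K where "K = {k. j < k \<and> k < n \<and> X k < Y k}"
    have finK: "finite K" unfolding K_def by auto
    have split: "(\<Sum>i<n. f i) = (\<Sum>i<Suc j. f i) + (\<Sum>i\<in>{Suc j..<n}. f i)" for f :: "nat \<Rightarrow> real"
    proof -
      have "(\<Sum>i\<in>{0..<Suc j}. f i) + (\<Sum>i\<in>{Suc j..<n}. f i) = (\<Sum>i\<in>{0..<n}. f i)"
        using jn by (intro sum.atLeastLessThan_concat) auto
      then show ?thesis by (simp add: atLeast0LessThan)
    qed
    have K_ne: "K \<noteq> {}"
    proof
      assume "K = {}"
      then have "\<forall>i\<in>{Suc j..<n}. 0 \<le> X i - Y i" unfolding K_def by force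
      then have "0 \<le> (\<Sum>i\<in>{Suc j..<n}. X i - Y i)" by (intro sum_nonneg) auto
      moreover have "(\<Sum>i<n. X i - Y i) = (\<Sum>i<Suc j. X i - Y i) + (\<Sum>i\<in>{Suc j..<n}. X i - Y i)" by (rule split)
      moreover have "(\<Sum>i<n. X i - Y i) = 0" using tot by (simp add: sum_subtractf)
      moreover have "(\<Sum>i<Suc j. X i - Y i) > 0" using gapj jn by (simp add: sum_subtractf)
      ultimately show False by linarith
    qed
    define k where "k = Min K"
    have kK: "k \<in> K" unfolding k_def using finK K_ne by simp
    have kn: "j < k" "k < n" "X k < Y k" using kK unfolding K_def by auto
    have kmin: "\<And>i. j < i \<Longrightarrow> i < n \<Longrightarrow> X i < Y i \<Longrightarrow> k \<le> i" unfolding k_def using finK K_def by auto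
    have mid: "X i = Y i" if "j < i" "i < k" for i
    proof -
      have "i < n" using that kn by simp
      then have "\<not> Y i < X i" using jmax that by force
      moreover have "\<not> X i < Y i" using kmin that \<open>i < n\<close> by force
      ultimately show ?thesis by simp
    qed
    define \<delta> where "\<delta> = min (X j - Y j) (Y k - X k)"
    have d0: "0 < \<delta>" unfolding \<delta>_def using jn kn by simp
    define X' where "X' = X(j := X j - \<delta>, k := X k + \<delta>)"
    have jk: "j \<noteq> k" using kn by simp
    have Xv: "X' m = (if m = j then X j - \<delta> else if m = k then X k + \<delta> else X m)" for m
      unfolding X'_def using jk by auto
    have Yjk: "Y k \<le> Y j" using sY kn by auto
    have Xj': "Y j \<le> X j - \<delta>" "X j - \<delta> \<le> X j" unfolding \<delta>_def using d0 jn kn by auto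
    have Xk': "X k + \<delta> \<le> Y k" "X k \<le> X k + \<delta>" unfolding \<delta>_def using d0 jn kn by auto
    have step1: "\<Phi> X \<le> \<Phi> X'"
      unfolding X'_def using Xj' Xk' Yjk jn kn jk
      by (intro Tstep boxX) auto
    have boxX': "\<forall>m<n. 0 \<le> X' m \<and> X' m \<le> 1"
      using boxX boxY Xj' Xk' jn kn unfolding Xv by force
    have sX': "\<forall>i i'. i \<le> i' \<longrightarrow> i' < n \<longrightarrow> X' i' \<le> X' i"
    proof (intro allI impI)
      fix i i' :: nat assume ii: "i \<le> i'" "i' < n"
      have sXi: "X i' \<le> X i" using sX ii by auto
      show "X' i' \<le> X' i"
      proof (cases "i = i'")
        case True then show ?thesis by simp
      next
        case ne: False
        consider "i < j" | "i = j" | "j < i \<and> i < k" | "i = k" | "k < i" by linarith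
        then show ?thesis
        proof cases
          case 1
          have xi: "X' i = X i" using 1 kn by (simp add: Xv)
          have xji: "X j \<le> X i" using sX 1 jn by auto
          consider "i' = j" | "i' = k" | "i' \<noteq> j \<and> i' \<noteq> k" by blast
          then show ?thesis
          proof cases
            case 1 then show ?thesis using Xj' xi xji by (simp add: Xv)
          next
            case 2 then have "X' i' = X k + \<delta>" using jk by (simp add: Xv)
            then show ?thesis using xi xji Xj' Xk' Yjk by linarith
          next
            case 3 then show ?thesis using xi sXi by (simp add: Xv)
          qed
        next
          case 2
          have xi: "X' i = X j - \<delta>" using 2 by (simp add: Xv)
          consider "i' < k" | "i' = k" | "k < i'" by linarith
          then show ?thesis
          proof cases
            case 1
            then have "X' i' = Y i'" using 2 ne ii mid[of i'] by (simp add: Xv)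
            moreover have "Y i' \<le> Y j" using sY ii 2 by auto
            ultimately show ?thesis using xi Xj' by linarith
          next
            case 3
            then have "X' i' = X i'" using kn 2 by (simp add: Xv)
            moreover have "X i' \<le> X k" using sX ii 3 by auto
            ultimately show ?thesis using xi Xj' Xk' Yjk by linarith
          qed (use xi Xj' Xk' Yjk jk in \<open>simp add: Xv\<close>)
        next
          case 3
          have xi: "X' i = Y i" using 3 mid[of i] by (simp add: Xv)
          consider "i' < k" | "i' = k" | "k < i'" by linarith
          then show ?thesis
          proof cases
            case 1
            then have "X' i' = Y i'" using 3 ii mid[of i'] by (simp add: Xv)
            then show ?thesis using xi sY ii by auto
          next
            case 2
            have "Y k \<le> Y i" using sY 2 ii by auto
            then show ?thesis using xi 2 Xk' jk by (simp add: Xv)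
          next
            case 4: 3
            then have "X' i' = X i'" using kn 3 by (simp add: Xv)
            moreover have "X i = Y i" using 3 mid by auto
            ultimately show ?thesis using xi sXi by linarith
          qed
        next
          case 4
          then have "X' i' = X i'" using ne ii kn by (simp add: Xv)
          moreover have "X' i = X k + \<delta>" using 4 jk by (simp add: Xv)
          moreover have "X i' \<le> X k" using sXi 4 by simp
          ultimately show ?thesis using Xk' by linarith
        next
          case 5
          then show ?thesis using kn ii sXi by (simp add: Xv)
        qed
      qed
    qed
    have sumX': "(\<Sum>i<m. X' i) = (\<Sum>i<m. X i) - (if j < m then \<delta> else 0) + (if k < m then \<delta> else 0)" for m
    proof -
      have "X' i = X i - (if i = j then \<delta> else 0) + (if i = k then \<delta> else 0)" for i
        using jk by (simp add: Xv)
      then have "(\<Sum>i<m. X' i) = (\<Sum>i<m. X i - (if i = j then \<delta> else 0) + (if i = k then \<delta> else 0))" by simp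
      also have "\<dots> = (\<Sum>i<m. X i) - (\<Sum>i<m. (if i = j then \<delta> else 0)) + (\<Sum>i<m. (if i = k then \<delta> else 0))"
        by (simp add: sum.distrib sum_subtractf)
      finally show ?thesis by simp
    qed
    have pre': "\<forall>m\<le>n. (\<Sum>i<m. Y i) \<le> (\<Sum>i<m. X' i)"
    proof (intro allI impI)
      fix m assume m: "m \<le> n"
      consider "m \<le> j" | "j < m \<and> m \<le> k" | "k < m" by linarith
      then show "(\<Sum>i<m. Y i) \<le> (\<Sum>i<m. X' i)"
      proof cases
        case 1 then show ?thesis using pre m kn by (simp add: sumX')
      next
        case 2
        have "(\<Sum>i<m. f i) = (\<Sum>i<Suc j. f i) + (\<Sum>i\<in>{Suc j..<m}. f i)" for f :: "nat \<Rightarrow> real"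
        proof -
          have "(\<Sum>i\<in>{0..<Suc j}. f i) + (\<Sum>i\<in>{Suc j..<m}. f i) = (\<Sum>i\<in>{0..<m}. f i)"
            using 2 by (intro sum.atLeastLessThan_concat) auto
          then show ?thesis by (simp add: atLeast0LessThan)
        qed
        then have "(\<Sum>i<m. X i - Y i) = (\<Sum>i<Suc j. X i - Y i) + (\<Sum>i\<in>{Suc j..<m}. X i - Y i)" .
        moreover have "(\<Sum>i\<in>{Suc j..<m}. X i - Y i) = 0"
          using 2 mid by (intro sum.neutral) auto
        moreover have "\<delta> \<le> (\<Sum>i<Suc j. X i - Y i)" using gapj unfolding \<delta>_def by (simp add: sum_subtractf)
        ultimately have "\<delta> \<le> (\<Sum>i<m. X i) - (\<Sum>i<m. Y i)" by (simp add: sum_subtractf)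
        then show ?thesis using 2 by (simp add: sumX')
      next
        case 3 then show ?thesis using pre m kn by (simp add: sumX')
      qed
    qed
    have tot': "(\<Sum>i<n. X' i) = (\<Sum>i<n. Y i)" using tot jn kn by (simp add: sumX')
    have card_lt: "card {m. m<n \<and> X' m \<noteq> Y m} < card {m. m<n \<and> X m \<noteq> Y m}"
    proof (rule psubset_card_mono)
      show "finite {m. m<n \<and> X m \<noteq> Y m}" by auto
      have sub: "{m. m<n \<and> X' m \<noteq> Y m} \<subseteq> {m. m<n \<and> X m \<noteq> Y m}"
        using jn kn by (auto simp: Xv split: if_splits)
      have "X j - \<delta> = Y j \<or> X k + \<delta> = Y k" unfolding \<delta>_def by (auto simp: min_def)
      then have "j \<notin> {m. m<n \<and> X' m \<noteq> Y m} \<or> k \<notin> {m. m<n \<and> X' m \<noteq> Y m}"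
        using jk by (auto simp: Xv)
      moreover have "j \<in> {m. m<n \<and> X m \<noteq> Y m}" "k \<in> {m. m<n \<and> X m \<noteq> Y m}" using jn kn by auto
      ultimately show "{m. m<n \<and> X' m \<noteq> Y m} \<subset> {m. m<n \<and> X m \<noteq> Y m}" using sub by blast
    qed
    have "\<Phi> X' \<le> \<Phi> Y"
      using less.hyps[OF card_lt boxX' boxY sX' sY pre' tot'] .
    then show ?thesis using step1 by linarith
  qed
qed

lemma sum_list_take_nth:
  fixes xs :: "real list"
  assumes "m \<le> length xs"
  shows "sum_list (take m xs) = (\<Sum>i<m. xs ! i)"
proof -
  have "sum_list (take m xs) = sum_list (map (\<lambda>i. take m xs ! i) [0..<length (take m xs)])"
    by (metis map_nth)
  also have "\<dots> = (\<Sum>i\<in>{0..<m}. take m xs ! i)"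
    using assms by (simp add: interv_sum_list_conv_sum_set_nat min_def)
  also have "\<dots> = (\<Sum>i<m. xs ! i)" by (simp add: atLeast0LessThan)
  finally show ?thesis .
qed

lemma sorted_vec:
  fixes x :: "nat \<Rightarrow> real" and n :: nat
  defines "XS \<equiv> rev (sort (map x [0..<n]))"
  shows "length XS = n" "map (\<lambda>i. XS ! i) [0..<n] = XS"
    "mset XS = mset (map x [0..<n])"
    "\<forall>i i'. i \<le> i' \<longrightarrow> i' < n \<longrightarrow> XS ! i' \<le> XS ! i"
    "\<And>i. i < n \<Longrightarrow> \<exists>k<n. XS ! i = x k"
    "\<And>m. m \<le> n \<Longrightarrow> (\<Sum>i<m. XS ! i) = top_sum n x m"
    "(\<Sum>i<n. XS ! i) = (\<Sum>i<n. x i)"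
proof -
  show len: "length XS = n" unfolding XS_def by simp
  show mp: "map (\<lambda>i. XS ! i) [0..<n] = XS" using len map_nth by metis
  show ms: "mset XS = mset (map x [0..<n])" unfolding XS_def by simp
  show "\<forall>i i'. i \<le> i' \<longrightarrow> i' < n \<longrightarrow> XS ! i' \<le> XS ! i"
  proof (intro allI impI)
    fix i i' :: nat assume ii: "i \<le> i'" "i' < n"
    define S where "S = sort (map x [0..<n])"
    have sS: "sorted S" and lS: "length S = n" unfolding S_def by auto
    have "XS ! i' = S ! (n - Suc i')" "XS ! i = S ! (n - Suc i)"
      using ii lS unfolding XS_def S_def[symmetric] by (auto simp: rev_nth)
    moreover have "S ! (n - Suc i') \<le> S ! (n - Suc i)"
      using sS lS ii by (auto simp: sorted_iff_nth_mono)
    ultimately show "XS ! i' \<le> XS ! i" by simp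
  qed
  show "\<exists>k<n. XS ! i = x k" if "i < n" for i
  proof -
    have "XS ! i \<in> set XS" using that len by simp
    also have "set XS = x ` {..<n}" using arg_cong[OF ms, of set_mset] by (simp add: atLeast0LessThan)
    finally show ?thesis by auto
  qed
  show "(\<Sum>i<m. XS ! i) = top_sum n x m" if "m \<le> n" for m
    unfolding top_sum_def XS_def[symmetric] using sum_list_take_nth[of m XS] len that by simp
  have "(\<Sum>i<n. XS ! i) = sum_list XS" using sum_list_take_nth[of n XS] len by simp
  also have "\<dots> = sum_list (map x [0..<n])" by (metis ms sum_mset_sum_list)
  also have "\<dots> = (\<Sum>i<n. x i)" by (simp add: interv_sum_list_conv_sum_set_nat atLeast0LessThan)
  finally show "(\<Sum>i<n. XS ! i) = (\<Sum>i<n. x i)" .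
qed

lemma schur_from_T:
  fixes \<Phi> :: "(nat \<Rightarrow> real) \<Rightarrow> real" and n :: nat
  assumes Tstep: "\<And>x i j a b. \<forall>k<n. 0 \<le> x k \<and> x k \<le> 1 \<Longrightarrow> i < n \<Longrightarrow> j < n \<Longrightarrow> i \<noteq> j \<Longrightarrow>
      a + b = x i + x j \<Longrightarrow> x j \<le> b \<Longrightarrow> b \<le> a \<Longrightarrow> a \<le> x i \<Longrightarrow> \<Phi> x \<le> \<Phi> (x(i:=a, j:=b))"
    and loc: "\<And>x y. (\<forall>k<n. x k = y k) \<Longrightarrow> \<Phi> x = \<Phi> y"
    and sym: "\<And>x y. mset (map x [0..<n]) = mset (map y [0..<n]) \<Longrightarrow> \<Phi> x = \<Phi> y"
  shows "schur_concave_on n {p. \<forall>i<n. 0 \<le> p i \<and> p i \<le> 1} \<Phi>"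
  unfolding schur_concave_on_def
proof (intro ballI impI)
  fix x y assume x: "x \<in> {p. \<forall>i<n. 0 \<le> p i \<and> p i \<le> 1}" and y: "y \<in> {p. \<forall>i<n. 0 \<le> p i \<and> p i \<le> 1}"
    and maj: "majorizes n x y"
  define XS where "XS = rev (sort (map x [0..<n]))"
  define YS where "YS = rev (sort (map y [0..<n]))"
  define sx where "sx i = XS ! i" for i
  define sy where "sy i = YS ! i" for i
  note X = sorted_vec[where x=x and n=n, folded XS_def]
  note Y = sorted_vec[where x=y and n=n, folded YS_def]
  have "sx = (!) XS" by (rule ext) (simp add: sx_def)
  then have msx: "map sx [0..<n] = XS" using X(2) by simp
  have "sy = (!) YS" by (rule ext) (simp add: sy_def)
  then have msy: "map sy [0..<n] = YS" using Y(2) by simp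
  have "\<Phi> x = \<Phi> sx" by (rule sym) (metis msx X(3))
  moreover have "\<Phi> y = \<Phi> sy" by (rule sym) (metis msy Y(3))
  moreover have "\<Phi> sx \<le> \<Phi> sy"
  proof (rule T_chain[OF Tstep loc])
    show "\<forall>k<n. 0 \<le> sx k \<and> sx k \<le> 1" using X(5) x unfolding sx_def by force
    show "\<forall>k<n. 0 \<le> sy k \<and> sy k \<le> 1" using Y(5) y unfolding sy_def by force
    show "\<forall>i i'. i \<le> i' \<longrightarrow> i' < n \<longrightarrow> sx i' \<le> sx i" using X(4) unfolding sx_def by blast
    show "\<forall>i i'. i \<le> i' \<longrightarrow> i' < n \<longrightarrow> sy i' \<le> sy i" using Y(4) unfolding sy_def by blast
    show "\<forall>m\<le>n. (\<Sum>i<m. sy i) \<le> (\<Sum>i<m. sx i)"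
      using maj X(6) Y(6) unfolding majorizes_def sx_def sy_def by auto
    show "(\<Sum>i<n. sx i) = (\<Sum>i<n. sy i)"
      using maj X(7) Y(7) unfolding majorizes_def sx_def sy_def by auto
  qed (auto)
  ultimately show "\<Phi> x \<le> \<Phi> y" by simp
qed



lemma dens_eq:
  fixes \<rho> :: real assumes r: "0 < \<rho>"
  shows "(\<lambda>x. ennreal (sinr_density 1 \<rho> x)) = (\<lambda>x. ennreal (exponential_density (1/\<rho>) x))"
proof (rule ext)
  fix x :: real
  show "ennreal (sinr_density 1 \<rho> x) = ennreal (exponential_density (1/\<rho>) x)"
  proof (cases "x < 0")
    case False
    then have x1: "x + 1 \<noteq> 0" by simp
    have "sinr_density 1 \<rho> x = exp(-x/\<rho>)/(x+1) * ((x+1)/\<rho>)" using False by (simp add: sinr_density_def)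
    also have "\<dots> = exp(-x/\<rho>)/\<rho>" using x1 by simp
    also have "\<dots> = exponential_density (1/\<rho>) x" using False by (simp add: exponential_density_def)
    finally show ?thesis by simp
  qed (simp add: sinr_density_def exponential_density_def)
qed

lemma ln_as_nn_integral:
  fixes y :: real assumes y: "0 \<le> y"
  shows "ennreal (ln (1 + y)) = (\<integral>\<^sup>+t. ennreal (1/(1+t)) * indicator {0<..<y} t \<partial>lborel)"
proof -
  have "(\<integral>\<^sup>+t. ennreal (1/(1+t)) * indicator {0..y} t \<partial>lborel) = ennreal (ln (1 + y) - ln (1 + 0))"
    using y by (intro nn_integral_FTC_Icc) (auto intro!: derivative_eq_intros simp: field_simps)
  also have "(\<integral>\<^sup>+t. ennreal (1/(1+t)) * indicator {0..y} t \<partial>lborel) = (\<integral>\<^sup>+t. ennreal (1/(1+t)) * indicator {0<..<y} t \<partial>lborel)"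
  proof (rule nn_integral_cong_AE)
    have "AE t in lborel. t \<noteq> 0" "AE t in lborel. t \<noteq> y" by (rule AE_lborel_singleton)+
    then show "AE t in lborel. ennreal (1/(1+t)) * indicator {0..y} t = ennreal (1/(1+t)) * indicator {0<..<y} t"
      by eventually_elim (auto split: split_indicator)
  qed
  finally show ?thesis by simp
qed

lemma ereal_helper: "\<not> (c::ereal) \<le> ereal t \<Longrightarrow> c \<le> ereal g \<Longrightarrow> t < g"
proof -
  assume "\<not> c \<le> ereal t" "c \<le> ereal g"
  then have "ereal t < ereal g" using not_le less_le_trans by metis
  then show "t < g" by simp
qed

lemma sum_rate_formula:
  fixes P :: "'a measure" and n :: nat and \<rho> :: real and gam :: "nat \<Rightarrow> 'a \<Rightarrow> real" and \<tau> :: "nat \<Rightarrow> ereal"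
  assumes PS: "prob_space P" and n1: "1 \<le> n" and r: "0 < \<rho>"
    and ind: "prob_space.indep_vars P (\<lambda>_. borel) gam {..<n}"
    and dist: "\<And>i. i < n \<Longrightarrow> distributed P lborel (gam i) (\<lambda>x. ennreal (sinr_density 1 \<rho> x))"
    and tau: "\<forall>i<n. 0 \<le> \<tau> i"
  shows "sum_rate1 P n gam \<tau> = phi n \<rho> (\<lambda>i. measure P {\<omega>\<in>space P. \<tau> i \<le> ereal (gam i \<omega>)})"
proof -
  interpret prob_space P by (rule PS)
  have distE: "distributed P lborel (gam i) (exponential_density (1/\<rho>))" if "i < n" for i
    using dist[OF that] unfolding dens_eq[OF r] .
  have gmeas: "gam i \<in> borel_measurable P" if "i < n" for i
    using distributed_measurable[OF dist[OF that]] by simp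
  define T where "T i \<omega> = trunc_sinr (gam i \<omega>) (\<tau> i)" for i \<omega>
  define Y where "Y \<omega> = Max ((\<lambda>i. T i \<omega>) ` {..<n})" for \<omega>
  define pe where "pe i = measure P {\<omega>\<in>space P. \<tau> i \<le> ereal (gam i \<omega>)}" for i
  have Tmeas: "T i \<in> borel_measurable P" if "i < n" for i
  proof -
    note [measurable] = gmeas[OF that]
    show ?thesis unfolding T_def trunc_sinr_def by measurable
  qed
  have Ymeas[measurable]: "Y \<in> borel_measurable P"
    unfolding Y_def by (rule borel_measurable_Max) (auto intro: Tmeas)
  have T0: "0 \<le> T i \<omega>" if "i < n" for i \<omega>
  proof (cases "\<tau> i \<le> ereal (gam i \<omega>)")
    case True then have "0 \<le> ereal (gam i \<omega>)" using tau that order_trans by blast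
    then show ?thesis using True unfolding T_def trunc_sinr_def by simp
  qed (simp add: T_def trunc_sinr_def)
  have nonempty: "{..<n} \<noteq> {}" using n1 by (auto simp: lessThan_empty_iff)
  have Y0: "0 \<le> Y \<omega>" for \<omega>
  proof -
    have "T 0 \<omega> \<le> Y \<omega>" unfolding Y_def using n1 by (intro Max_ge) auto
    then show ?thesis using T0[of 0 \<omega>] n1 by linarith
  qed
  have Yle: "Y \<omega> \<le> t \<longleftrightarrow> (\<forall>i<n. T i \<omega> \<le> t)" for \<omega> t
    unfolding Y_def using nonempty by (subst Max_le_iff) auto
  have pe01: "0 \<le> pe i \<and> pe i \<le> 1" for i unfolding pe_def by simp
  have PT: "prob {\<omega>\<in>space P. t < T i \<omega>} = min (pe i) (exp (-t/\<rho>))" if i: "i < n" and t: "0 < t" for i t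
  proof -
    note [measurable] = gmeas[OF i]
    have gt: "prob {\<omega>\<in>space P. t < gam i \<omega>} = exp (-t/\<rho>)"
      using exponential_distributedD_gt[OF distE[OF i], of t] t r by simp
    have e1: "{\<omega>\<in>space P. t < T i \<omega>} = {\<omega>\<in>space P. \<tau> i \<le> ereal (gam i \<omega>) \<and> t < gam i \<omega>}"
      using t unfolding T_def trunc_sinr_def by auto
    show ?thesis
    proof (cases "\<tau> i \<le> ereal t")
      case True
      then have "{\<omega>\<in>space P. t < T i \<omega>} = {\<omega>\<in>space P. t < gam i \<omega>}"
        unfolding e1 by (auto intro: order_trans)
      moreover have "prob {\<omega>\<in>space P. t < gam i \<omega>} \<le> pe i"
        unfolding pe_def using True by (intro finite_measure_mono) (auto intro: order_trans, measurable)
      ultimately show ?thesis using gt by simp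
    next
      case False
      then have "{\<omega>\<in>space P. t < T i \<omega>} = {\<omega>\<in>space P. \<tau> i \<le> ereal (gam i \<omega>)}"
        unfolding e1 using ereal_helper by blast
      moreover have "pe i \<le> prob {\<omega>\<in>space P. t < gam i \<omega>}"
        unfolding pe_def using False
        by (intro finite_measure_mono) (auto dest: ereal_helper, measurable)
      ultimately show ?thesis using gt pe_def by simp
    qed
  qed
  have PY: "prob {\<omega>\<in>space P. t < Y \<omega>} = Gf n \<rho> pe t" if t: "0 < t" for t
  proof -
    define A where "A i = {\<omega>\<in>space P. T i \<omega> \<le> t}" for i
    have iS: "indep_sets (\<lambda>i. {gam i -` B \<inter> space P | B. B \<in> sets borel}) {..<n}"
      using ind unfolding indep_vars_def2 by simp
    have AS: "A i \<in> {gam i -` B \<inter> space P | B. B \<in> sets borel}" if i: "i < n" for i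
    proof -
      have "{g. trunc_sinr g (\<tau> i) \<le> t} \<in> sets borel" unfolding trunc_sinr_def by measurable
      moreover have "A i = gam i -` {g. trunc_sinr g (\<tau> i) \<le> t} \<inter> space P"
        unfolding A_def T_def by auto
      ultimately show ?thesis by blast
    qed
    have prodA: "prob (\<Inter>i\<in>{..<n}. A i) = (\<Prod>i\<in>{..<n}. prob (A i))"
      using AS by (intro indep_setsD[OF iS]) (auto simp: nonempty)
    have inter: "(\<Inter>i\<in>{..<n}. A i) = {\<omega>\<in>space P. Y \<omega> \<le> t}"
      using nonempty unfolding A_def Yle by auto
    have Aev: "A i \<in> events" if "i < n" for i
    proof -
      note [measurable] = Tmeas[OF that]
      show ?thesis unfolding A_def by measurable
    qed
    have pA: "prob (A i) = 1 - min (pe i) (exp (-t/\<rho>))" if i: "i < n" for i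
    proof -
      have "A i = space P - {\<omega>\<in>space P. t < T i \<omega>}" unfolding A_def by auto
      moreover have "{\<omega>\<in>space P. t < T i \<omega>} \<in> events"
      proof -
        note [measurable] = Tmeas[OF i]
        show ?thesis by measurable
      qed
      ultimately show ?thesis using PT[OF i t] prob_compl by simp
    qed
    have "{\<omega>\<in>space P. t < Y \<omega>} = space P - {\<omega>\<in>space P. Y \<omega> \<le> t}" by auto
    moreover have "{\<omega>\<in>space P. Y \<omega> \<le> t} \<in> events" by measurable
    ultimately have "prob {\<omega>\<in>space P. t < Y \<omega>} = 1 - prob {\<omega>\<in>space P. Y \<omega> \<le> t}"
      using prob_compl by simp
    also have "\<dots> = 1 - (\<Prod>i\<in>{..<n}. prob (A i))" using prodA inter by simp
    also have "\<dots> = Gf n \<rho> pe t" unfolding Gf_def using pA by simp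
    finally show ?thesis .
  qed
  have step: "(\<integral>\<^sup>+\<omega>. ennreal (ln (1 + Y \<omega>)) \<partial>P) = (\<integral>\<^sup>+t. ennreal (indicator {0<..} t *\<^sub>R (Gf n \<rho> pe t / (1+t))) \<partial>lborel)"
  proof -
    define f where "f t \<omega> = (if 0 < t \<and> t < Y \<omega> then ennreal (1/(1+t)) else 0)" for t \<omega>
    have fm: "case_prod f \<in> borel_measurable (lborel \<Otimes>\<^sub>M P)" unfolding f_def by measurable
    have "(\<integral>\<^sup>+\<omega>. ennreal (ln (1 + Y \<omega>)) \<partial>P) = (\<integral>\<^sup>+\<omega>. (\<integral>\<^sup>+t. f t \<omega> \<partial>lborel) \<partial>P)"
    proof (rule nn_integral_cong)
      fix \<omega>
      have "ennreal (ln (1 + Y \<omega>)) = (\<integral>\<^sup>+t. ennreal (1/(1+t)) * indicator {0<..<Y \<omega>} t \<partial>lborel)"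
        by (rule ln_as_nn_integral[OF Y0])
      also have "\<dots> = (\<integral>\<^sup>+t. f t \<omega> \<partial>lborel)"
        unfolding f_def by (intro nn_integral_cong) (auto split: split_indicator)
      finally show "ennreal (ln (1 + Y \<omega>)) = (\<integral>\<^sup>+t. f t \<omega> \<partial>lborel)" .
    qed
    also have "\<dots> = (\<integral>\<^sup>+t. (\<integral>\<^sup>+\<omega>. f t \<omega> \<partial>P) \<partial>lborel)"
    proof -
      have "pair_sigma_finite lborel P"
        by (simp add: pair_sigma_finite_def lborel.sigma_finite_measure_axioms prob_space_imp_sigma_finite PS)
      from pair_sigma_finite.Fubini'[OF this fm] show ?thesis by simp
    qed
    also have "\<dots> = (\<integral>\<^sup>+t. ennreal (indicator {0<..} t *\<^sub>R (Gf n \<rho> pe t / (1+t))) \<partial>lborel)"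
    proof (rule nn_integral_cong)
      fix t :: real
      show "(\<integral>\<^sup>+\<omega>. f t \<omega> \<partial>P) = ennreal (indicator {0<..} t *\<^sub>R (Gf n \<rho> pe t / (1+t)))"
      proof (cases "0 < t")
        case True
        have ev: "{\<omega>\<in>space P. t < Y \<omega>} \<in> events" by measurable
        have "(\<integral>\<^sup>+\<omega>. f t \<omega> \<partial>P) = (\<integral>\<^sup>+\<omega>. ennreal (1/(1+t)) * indicator {\<omega>\<in>space P. t < Y \<omega>} \<omega> \<partial>P)"
          unfolding f_def using True by (intro nn_integral_cong) (auto split: split_indicator)
        also have "\<dots> = ennreal (1/(1+t)) * emeasure P {\<omega>\<in>space P. t < Y \<omega>}"
          using ev by (rule nn_integral_cmult_indicator)
        also have "\<dots> = ennreal (1/(1+t)) * ennreal (Gf n \<rho> pe t)"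
          using PY[OF True] by (simp add: emeasure_eq_measure)
        also have "\<dots> = ennreal (Gf n \<rho> pe t / (1+t))"
          using True Gf_bounds[of n pe \<rho> t] pe01 by (simp add: ennreal_mult[symmetric])
        finally show ?thesis using True by simp
      next
        case False
        then show ?thesis unfolding f_def by simp
      qed
    qed
    finally show ?thesis .
  qed
  have "sum_rate1 P n gam \<tau> = enn2real (\<integral>\<^sup>+\<omega>. ennreal (ln (1 + Y \<omega>)) \<partial>P)"
    unfolding sum_rate1_def Y_def[symmetric] T_def[symmetric]
    using Y0 by (intro integral_eq_nn_integral) (auto intro!: AE_I2 add_nonneg_nonneg)
  also have "\<dots> = enn2real (\<integral>\<^sup>+t. ennreal (indicator {0<..} t *\<^sub>R (Gf n \<rho> pe t / (1+t))) \<partial>lborel)"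
    using step by simp
  also have "\<dots> = phi n \<rho> pe"
  proof -
    have box: "\<forall>i<n. 0 \<le> pe i \<and> pe i \<le> 1" using pe01 by auto
    have "phi n \<rho> pe = (\<integral>t. indicator {0<..} t *\<^sub>R (Gf n \<rho> pe t / (1+t)) \<partial>lborel)"
      unfolding phi_def set_lebesgue_integral_def ..
    also have "\<dots> = enn2real (\<integral>\<^sup>+t. ennreal (indicator {0<..} t *\<^sub>R (Gf n \<rho> pe t / (1+t))) \<partial>lborel)"
    proof (rule integral_eq_nn_integral)
      show "(\<lambda>t. indicator {0<..} t *\<^sub>R (Gf n \<rho> pe t / (1+t))) \<in> borel_measurable lborel"
        using phi_int[OF r box] unfolding set_integrable_def by (rule borel_measurable_integrable)
      show "AE t in lborel. 0 \<le> indicator {0<..} t *\<^sub>R (Gf n \<rho> pe t / (1+t))"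
        using Gf_bounds[OF box] by (auto intro!: AE_I2 split: split_indicator)
    qed
    finally show ?thesis by simp
  qed
  finally show ?thesis unfolding pe_def .
qed



lemma phi_loc:
  assumes "\<forall>k<n. x k = y k"
  shows "phi n \<rho> x = phi n \<rho> y"
proof -
  have "Gf n \<rho> x = Gf n \<rho> y" unfolding Gf_def using assms by (intro ext arg_cong2[where f="(-)"] prod.cong) auto
  then show ?thesis unfolding phi_def by simp
qed

lemma phi_sym:
  assumes "mset (map x [0..<n]) = mset (map y [0..<n])"
  shows "phi n \<rho> x = phi n \<rho> y"
proof -
  have pr: "(\<Prod>i<n. h (z i)) = prod_mset (image_mset h (mset (map z [0..<n])))" for h :: "real \<Rightarrow> real" and z :: "nat \<Rightarrow> real"
    by (simp add: prod_unfold_prod_mset mset_set_upto_eq_mset_upto image_mset.compositionality comp_def)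
  have "Gf n \<rho> x = Gf n \<rho> y" unfolding Gf_def
    by (rule ext) (subst (1 2) pr, simp only: assms)
  then show ?thesis unfolding phi_def by simp
qed

lemma phi_schur:
  fixes \<rho> :: real
  assumes "0 < \<rho>" "\<rho> \<le> 1"
  shows "schur_concave_on n {p. \<forall>i<n. 0 \<le> p i \<and> p i \<le> 1} (phi n \<rho>)"
  by (rule schur_from_T) (auto intro: phi_T[OF assms] phi_loc phi_sym)

lemma prob_ge:
  fixes P :: "'a measure" and \<rho> c :: real
  assumes PS: "prob_space P" and r: "0 < \<rho>"
    and dist: "distributed P lborel g (\<lambda>x. ennreal (sinr_density 1 \<rho> x))" and c: "0 \<le> c"
  shows "measure P {\<omega>\<in>space P. c \<le> g \<omega>} = exp (-c/\<rho>)"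
proof -
  interpret prob_space P by (rule PS)
  have distE: "distributed P lborel g (exponential_density (1/\<rho>))"
    using dist unfolding dens_eq[OF r] .
  have gm[measurable]: "g \<in> borel_measurable P" using distributed_measurable[OF dist] by simp
  have gt: "prob {\<omega>\<in>space P. c < g \<omega>} = exp (-c/\<rho>)"
    using exponential_distributedD_gt[OF distE c] r by simp
  have "emeasure P (g -` {c} \<inter> space P) = (\<integral>\<^sup>+x. ennreal (sinr_density 1 \<rho> x) * indicator {c} x \<partial>lborel)"
    by (rule distributed_emeasure[OF dist]) simp
  also have "\<dots> = (\<integral>\<^sup>+x. 0 \<partial>(lborel :: real measure))"
  proof (rule nn_integral_cong_AE)
    show "AE x in lborel. ennreal (sinr_density 1 \<rho> x) * indicator {c} x = 0"
      using AE_lborel_singleton[of c] by eventually_elim auto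
  qed
  finally have "emeasure P (g -` {c} \<inter> space P) = 0" by simp
  then have z: "prob {\<omega>\<in>space P. g \<omega> = c} = 0"
    by (simp add: emeasure_eq_measure vimage_def Int_def conj_commute)
  have "prob {\<omega>\<in>space P. c \<le> g \<omega>} \<le> prob ({\<omega>\<in>space P. c < g \<omega>} \<union> {\<omega>\<in>space P. g \<omega> = c})"
    by (intro finite_measure_mono) auto
  also have "\<dots> \<le> prob {\<omega>\<in>space P. c < g \<omega>} + prob {\<omega>\<in>space P. g \<omega> = c}"
    by (intro measure_Un_le) auto
  finally have 1: "prob {\<omega>\<in>space P. c \<le> g \<omega>} \<le> exp (-c/\<rho>)" using gt z by simp
  have "prob {\<omega>\<in>space P. c < g \<omega>} \<le> prob {\<omega>\<in>space P. c \<le> g \<omega>}"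
    by (intro finite_measure_mono) auto
  then show ?thesis using 1 gt by simp
qed

lemma thr_prob:
  fixes P :: "'a measure" and \<rho> p :: real
  assumes PS: "prob_space P" and r: "0 < \<rho>"
    and dist: "distributed P lborel g (\<lambda>x. ennreal (sinr_density 1 \<rho> x))" and p: "0 \<le> p" "p \<le> 1"
  shows "0 \<le> sinr_thr 1 \<rho> p" "measure P {\<omega>\<in>space P. sinr_thr 1 \<rho> p \<le> ereal (g \<omega>)} = p"
proof -
  have "0 \<le> sinr_thr 1 \<rho> p \<and> measure P {\<omega>\<in>space P. sinr_thr 1 \<rho> p \<le> ereal (g \<omega>)} = p"
  proof (cases "p = 0")
    case True
    then show ?thesis by (simp add: sinr_thr_def)
  next
    case False
    then have p0: "0 < p" using p by simp
    define x0 where "x0 = - \<rho> * ln p"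
    have x0: "0 \<le> x0" unfolding x0_def using p0 p r by (simp add: mult_le_0_iff)
    have ex: "exp (-x0/\<rho>) = p" unfolding x0_def using r p0 by simp
    have cdf: "sinr_cdf 1 \<rho> x = 1 - exp (-x/\<rho>)" if "0 \<le> x" for x
      using that by (simp add: sinr_cdf_def)
    have "(THE x. 0 \<le> x \<and> sinr_cdf 1 \<rho> x = 1 - p) = x0"
    proof (rule the_equality)
      show "0 \<le> x0 \<and> sinr_cdf 1 \<rho> x0 = 1 - p" using x0 ex cdf by simp
      fix x assume "0 \<le> x \<and> sinr_cdf 1 \<rho> x = 1 - p"
      then have "exp (-x/\<rho>) = p" "0 \<le> x" using cdf by auto
      then have "-x/\<rho> = ln p" using p0 by auto
      then show "x = x0" unfolding x0_def using r by (simp add: field_simps)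
    qed
    then have thr: "sinr_thr 1 \<rho> p = ereal x0" unfolding sinr_thr_def using False by simp
    show ?thesis unfolding thr using prob_ge[OF PS r dist x0] ex x0 by simp
  qed
  then show "0 \<le> sinr_thr 1 \<rho> p" "measure P {\<omega>\<in>space P. sinr_thr 1 \<rho> p \<le> ereal (g \<omega>)} = p" by auto
qed

lemma top_sum_mean:
  fixes x :: "nat \<Rightarrow> real" and n k :: nat
  assumes "k \<le> n" "0 < n"
  shows "real k * ((\<Sum>i<n. x i) / real n) \<le> top_sum n x k"
proof -
  define XS where "XS = rev (sort (map x [0..<n]))"
  note X = sorted_vec[where x=x and n=n, folded XS_def]
  define S where "S m = (\<Sum>i<m. XS ! i)" for m
  have Sk: "S k = top_sum n x k" using X(6) assms unfolding S_def by simp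
  have Sn: "S n = (\<Sum>i<n. x i)" using X(7) unfolding S_def by simp
  have key: "real k * S n \<le> real n * S k"
  proof (cases "k = 0")
    case True then show ?thesis by (simp add: S_def)
  next
    case False
    define v where "v = XS ! (k - 1)"
    have pre: "real k * v \<le> S k"
    proof -
      have "(\<Sum>i<k. v) \<le> (\<Sum>i<k. XS ! i)" unfolding v_def using X(4) assms False
        by (intro sum_mono) auto
      then show ?thesis unfolding S_def by simp
    qed
    have split: "S n = S k + (\<Sum>i\<in>{k..<n}. XS ! i)"
    proof -
      have "(\<Sum>i\<in>{0..<k}. XS ! i) + (\<Sum>i\<in>{k..<n}. XS ! i) = (\<Sum>i\<in>{0..<n}. XS ! i)"
        using assms by (intro sum.atLeastLessThan_concat) auto
      then show ?thesis unfolding S_def by (simp add: atLeast0LessThan)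
    qed
    have suf: "(\<Sum>i\<in>{k..<n}. XS ! i) \<le> real (n - k) * v"
    proof -
      have "(\<Sum>i\<in>{k..<n}. XS ! i) \<le> (\<Sum>i\<in>{k..<n}. v)" unfolding v_def using X(4) False
        by (intro sum_mono) auto
      then show ?thesis by simp
    qed
    have "real k * S n = real k * S k + real k * (\<Sum>i\<in>{k..<n}. XS ! i)" using split by (simp add: algebra_simps)
    also have "\<dots> \<le> real k * S k + real k * (real (n - k) * v)"
      using suf by (intro add_left_mono mult_left_mono) auto
    also have "\<dots> = real k * S k + real (n - k) * (real k * v)" by (simp add: algebra_simps)
    also have "\<dots> \<le> real k * S k + real (n - k) * S k"
      using pre by (intro add_left_mono mult_left_mono) auto
    also have "\<dots> = real n * S k" using assms by (simp add: of_nat_diff algebra_simps)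
    finally show ?thesis .
  qed
  then show ?thesis using assms Sk Sn by (simp add: field_simps)
qed

lemma top_sum_const:
  assumes "k \<le> n"
  shows "top_sum n (\<lambda>_. c) k = real k * c"
proof -
  define XS where "XS = rev (sort (map (\<lambda>_::nat. c) [0..<n]))"
  note X = sorted_vec[where x="\<lambda>_. c" and n=n, folded XS_def]
  have "top_sum n (\<lambda>_. c) k = (\<Sum>i<k. XS ! i)" using X(6)[OF assms] by simp
  also have "\<dots> = (\<Sum>i<k. c)" using X(5) assms by (intro sum.cong) force+
  finally show ?thesis by simp
qed

theorem theorem2:
  fixes P :: "'a measure" and n :: nat and \<rho> :: real and gam :: "nat \<Rightarrow> 'a \<Rightarrow> real"
  assumes "prob_space P"
    and "n \<ge> 2"
    and "0 < \<rho>" and "\<rho> \<le> 1"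
    and "prob_space.indep_vars P (\<lambda>_. borel) gam {..<n}"
    and "\<And>i. i < n \<Longrightarrow> distributed P lborel (gam i) (\<lambda>x. ennreal (sinr_density 1 \<rho> x))"
  shows "schur_concave_on n {p. \<forall>i<n. 0 \<le> p i \<and> p i \<le> 1}
           (\<lambda>p. sum_rate1 P n gam (\<lambda>i. sinr_thr 1 \<rho> (p i)))
       \<and> (\<forall>lam\<in>{0<..real n}. \<forall>\<tau> :: nat \<Rightarrow> ereal.
            (\<forall>i<n. 0 \<le> \<tau> i) \<and>
            (\<Sum>i<n. measure P {\<omega>\<in>space P. \<tau> i \<le> ereal (gam i \<omega>)}) \<le> lam \<longrightarrow>
            (\<exists>t :: ereal. 0 \<le> t \<and>
               (\<Sum>i<n. measure P {\<omega>\<in>space P. t \<le> ereal (gam i \<omega>)}) \<le> lam \<and>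
               sum_rate1 P n gam \<tau> \<le> sum_rate1 P n gam (\<lambda>_. t)))"
proof -
  interpret prob_space P by (rule assms(1))
  have n1: "1 \<le> n" and n0: "0 < n" using assms(2) by auto
  note r = assms(3,4)
  note dist = assms(6)
  define box where "box = {p::nat\<Rightarrow>real. \<forall>i<n. 0 \<le> p i \<and> p i \<le> 1}"
  have tf: "sum_rate1 P n gam (\<lambda>i. sinr_thr 1 \<rho> (p i)) = phi n \<rho> p" if p: "p \<in> box" for p
  proof -
    have tau: "\<forall>i<n. 0 \<le> sinr_thr 1 \<rho> (p i)" using thr_prob(1)[OF assms(1) r(1) dist] p unfolding box_def by auto
    have "sum_rate1 P n gam (\<lambda>i. sinr_thr 1 \<rho> (p i)) = phi n \<rho> (\<lambda>i. measure P {\<omega>\<in>space P. sinr_thr 1 \<rho> (p i) \<le> ereal (gam i \<omega>)})"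
      by (rule sum_rate_formula[OF assms(1) n1 r(1) assms(5) dist tau])
    also have "\<dots> = phi n \<rho> p"
      using thr_prob(2)[OF assms(1) r(1) dist] p unfolding box_def by (intro phi_loc) auto
    finally show ?thesis .
  qed
  have part1: "schur_concave_on n box (\<lambda>p. sum_rate1 P n gam (\<lambda>i. sinr_thr 1 \<rho> (p i)))"
    using phi_schur[OF r, of n] tf unfolding schur_concave_on_def box_def[symmetric] by simp
  have part2: "\<forall>lam\<in>{0<..real n}. \<forall>\<tau> :: nat \<Rightarrow> ereal.
            (\<forall>i<n. 0 \<le> \<tau> i) \<and>
            (\<Sum>i<n. measure P {\<omega>\<in>space P. \<tau> i \<le> ereal (gam i \<omega>)}) \<le> lam \<longrightarrow>
            (\<exists>t :: ereal. 0 \<le> t \<and>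
               (\<Sum>i<n. measure P {\<omega>\<in>space P. t \<le> ereal (gam i \<omega>)}) \<le> lam \<and>
               sum_rate1 P n gam \<tau> \<le> sum_rate1 P n gam (\<lambda>_. t))"
  proof (intro ballI allI impI)
    fix lam :: real and \<tau> :: "nat \<Rightarrow> ereal"
    assume h: "(\<forall>i<n. 0 \<le> \<tau> i) \<and> (\<Sum>i<n. measure P {\<omega>\<in>space P. \<tau> i \<le> ereal (gam i \<omega>)}) \<le> lam"
    define pe where "pe i = measure P {\<omega>\<in>space P. \<tau> i \<le> ereal (gam i \<omega>)}" for i
    define m where "m = (\<Sum>i<n. pe i) / real n"
    have pe01: "0 \<le> pe i \<and> pe i \<le> 1" for i unfolding pe_def by simp
    have m0: "0 \<le> m" unfolding m_def using pe01 by (intro divide_nonneg_nonneg sum_nonneg) auto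
    have m1: "m \<le> 1"
    proof -
      have "(\<Sum>i<n. pe i) \<le> (\<Sum>i<n. 1)" using pe01 by (intro sum_mono) auto
      then show ?thesis unfolding m_def using n0 by (simp add: divide_le_eq)
    qed
    define t where "t = sinr_thr 1 \<rho> m"
    have t0: "0 \<le> t" unfolding t_def using thr_prob(1)[OF assms(1) r(1) dist[OF n0] m0 m1] .
    have mt: "measure P {\<omega>\<in>space P. t \<le> ereal (gam i \<omega>)} = m" if "i < n" for i
      unfolding t_def using thr_prob(2)[OF assms(1) r(1) dist[OF that] m0 m1] .
    have sumt: "(\<Sum>i<n. measure P {\<omega>\<in>space P. t \<le> ereal (gam i \<omega>)}) = (\<Sum>i<n. pe i)"
    proof -
      have "(\<Sum>i<n. measure P {\<omega>\<in>space P. t \<le> ereal (gam i \<omega>)}) = (\<Sum>i<n. m)" using mt by simp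
      also have "\<dots> = (\<Sum>i<n. pe i)" unfolding m_def using n0 by simp
      finally show ?thesis .
    qed
    have R1: "sum_rate1 P n gam \<tau> = phi n \<rho> pe"
      unfolding pe_def using h by (intro sum_rate_formula[OF assms(1) n1 r(1) assms(5) dist]) auto
    have R2: "sum_rate1 P n gam (\<lambda>_. t) = phi n \<rho> (\<lambda>_. m)"
    proof -
      have "sum_rate1 P n gam (\<lambda>_. t) = phi n \<rho> (\<lambda>i. measure P {\<omega>\<in>space P. t \<le> ereal (gam i \<omega>)})"
        using t0 by (intro sum_rate_formula[OF assms(1) n1 r(1) assms(5) dist]) auto
      also have "\<dots> = phi n \<rho> (\<lambda>_. m)" using mt by (intro phi_loc) auto
      finally show ?thesis .
    qed
    have maj: "majorizes n pe (\<lambda>_. m)"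
      unfolding majorizes_def
    proof (intro conjI allI impI)
      fix k assume k: "k \<le> n"
      show "top_sum n (\<lambda>_. m) k \<le> top_sum n pe k"
        using top_sum_const[OF k, of m] top_sum_mean[OF k n0, of pe] unfolding m_def by simp
    next
      show "(\<Sum>i<n. pe i) = (\<Sum>i<n. m)" unfolding m_def using n0 by simp
    qed
    have "phi n \<rho> pe \<le> phi n \<rho> (\<lambda>_. m)"
      using phi_schur[OF r, of n] maj pe01 m0 m1 unfolding schur_concave_on_def by auto
    then show "\<exists>t :: ereal. 0 \<le> t \<and>
               (\<Sum>i<n. measure P {\<omega>\<in>space P. t \<le> ereal (gam i \<omega>)}) \<le> lam \<and>
               sum_rate1 P n gam \<tau> \<le> sum_rate1 P n gam (\<lambda>_. t)"
      using t0 sumt h R1 R2 unfolding pe_def by auto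
  qed
  show ?thesis using part1 part2 unfolding box_def by blast
qed

end
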